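(* The parameterized problem Multicolored Independent Set does not belong to LOCAL-FPT. That is, there is no computable function $f$ and no LOCAL algorithm that, on every instance $(G,k)$ of Multicolored Independent Set, terminates within $f(k)$ rounds and decides correctly (with disjunctive acceptance) whether $(G,k)$ is a yes-instance.
   Context: Distributed models. A network is a finite connected undirected graph $G$ with $n=|V(G)|$ nodes; every node has a unique identifier of $O(\log n)$ bits. Initially each node knows only its own identifier, the identifiers of its neighbours, its own input labels, and the parameter $k$. Computation proceeds in synchronous rounds; in each round each node performs arbitrary local computation, sends messages and receives the messages sent to it. In the LOCAL model messages to neighbours have unbounded size. The running time is the number of rounds until all nodes have terminated. For $s,t\in\mathbb N$, $\mathcal G_{s,t}$ denotes the set of finite connected graphs $G$ equipped with unary predicates $P_1,\dots,P_s\subseteq V(G)$ and binary predicates $E_1,\dots,E_t\subseteq V(G)^2$. A parameterized decision problem is a set $\mathsf P\subseteq\mathcal G_{s,t}\times\mathbb N$; instances are pairs $(G,k)$, $k$ being the parameter. A distributed algorithm decides $\mathsf P$ if on every instance $(G,k)$ (run on network $G$, every node knowing $k$) every node terminates with output accept or reject, and $(G,k)\in\mathsf P$ iff at least one node accepts. LOCAL-FPT is the class of parameterized problems decided by a LOCAL algorithm that terminates within $f(k)$ rounds on every instance $(G,k)$, for some computable function $f$. Multicolored Independent Set: an instance is an integer $k\ge 1$ and a graph $G\in\mathcal G_{k,1}$ (the binary predicate being the edge relation), where each vertex lies in at most one of the colour classes $P_1,\dots,P_k$; it is a yes-instance iff there are vertices $v_1\in P_1,\dots,v_k\in P_k$ that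 are pairwise non-adjacent. The parameter is $k$. *)

theory Defs
  imports Main
begin

text \<open>A network has vertex set V (a finite set of natural numbers); each vertex IS its
  unique identifier. The identifiers
  have O(log n) bits, i.e. they lie in {0..<n^c} for a constant c.\<close>

definition nbrs :: "(nat \<times> nat) set \<Rightarrow> nat \<Rightarrow> nat set" where
  "nbrs E v = {u. (v, u) \<in> E}"

definition network :: "nat set \<Rightarrow> (nat \<times> nat) set \<Rightarrow> bool" where
  "network V E \<longleftrightarrow> finite V \<and> V \<noteq> {} \<and> E \<subseteq> V \<times> V \<and> sym E \<and> irrefl E
     \<and> (\<forall>u\<in>V. \<forall>v\<in>V. (u, v) \<in> E\<^sup>*)"

definition ids_bounded :: "nat \<Rightarrow> nat set \<Rightarrow> bool" where
  "ids_bounded c V \<longleftrightarrow> V \<subseteq> {..< card V ^ c}"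

text \<open>Instance: k \<ge> 1, network (V,E), colour classes P 1, ..., P k \<subseteq> V, each vertex in
  at most one class (the binary predicate E_1 is the edge relation E itself).\<close>

definition mcis_instance :: "nat set \<Rightarrow> (nat \<times> nat) set \<Rightarrow> (nat \<Rightarrow> nat set) \<Rightarrow> nat \<Rightarrow> bool" where
  "mcis_instance V E P k \<longleftrightarrow> k \<ge> 1 \<and> network V E \<and> (\<forall>i\<in>{1..k}. P i \<subseteq> V)
     \<and> (\<forall>i\<in>{1..k}. \<forall>j\<in>{1..k}. i \<noteq> j \<longrightarrow> P i \<inter> P j = {})"

definition mcis_yes :: "nat set \<Rightarrow> (nat \<times> nat) set \<Rightarrow> (nat \<Rightarrow> nat set) \<Rightarrow> nat \<Rightarrow> bool" where
  "mcis_yes V E P k \<longleftrightarrow> (\<exists>x :: nat \<Rightarrow> nat. (\<forall>i\<in>{1..k}. x i \<in> P i)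
     \<and> (\<forall>i\<in>{1..k}. \<forall>j\<in>{1..k}. i \<noteq> j \<longrightarrow> (x i, x j) \<notin> E))"

text \<open>States of type 's, messages of type 'm (arbitrary, i.e. unbounded size).
  init k v N L: initial state of node with identifier v, neighbour identifiers N,
    input labels L (the indices i of the colour classes P i containing v), parameter k.
  msg s u: message sent in state s to the neighbour with identifier u.
  step s R: new state after receiving R u (Some message from neighbour u, None if no message).
  out s: None = not yet terminated, Some True = accept, Some False = reject.
  A terminated node keeps its state (and output) and sends no further messages.\<close>

record ('s, 'm) local_alg =
  init :: "nat \<Rightarrow> nat \<Rightarrow> nat set \<Rightarrow> nat set \<Rightarrow> 's"
  msg  :: "'s \<Rightarrow> nat \<Rightarrow> 'm"
  step :: "'s \<Rightarrow> (nat \<Rightarrow> 'm option) \<Rightarrow> 's"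
  out  :: "'s \<Rightarrow> bool option"

fun run :: "('s, 'm) local_alg \<Rightarrow> (nat \<times> nat) set \<Rightarrow> (nat \<Rightarrow> nat set) \<Rightarrow> nat
             \<Rightarrow> nat \<Rightarrow> nat \<Rightarrow> 's" where
  "run A E P k 0 v = init A k v (nbrs E v) {i \<in> {1..k}. v \<in> P i}"
| "run A E P k (Suc t) v =
     (if out A (run A E P k t v) \<noteq> None then run A E P k t v
      else step A (run A E P k t v)
        (\<lambda>u. if u \<in> nbrs E v \<and> out A (run A E P k t u) = None
             then Some (msg A (run A E P k t u) v) else None))"

definition mcis_local_fpt_alg :: "nat \<Rightarrow> ('s, 'm) local_alg \<Rightarrow> (nat \<Rightarrow> nat) \<Rightarrow> bool" where
  "mcis_local_fpt_alg c A f \<longleftrightarrow>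
     (\<forall>V E P k. mcis_instance V E P k \<and> ids_bounded c V \<longrightarrow>
        (\<forall>v\<in>V. out A (run A E P k (f k) v) \<noteq> None)
      \<and> ((\<exists>v\<in>V. out A (run A E P k (f k) v) = Some True) \<longleftrightarrow> mcis_yes V E P k))"

end

theory Submission
  imports Defs
begin

lemma run_local:
  assumes E: "\<And>u w. (u,w) \<in> E \<Longrightarrow> u \<le> w + 1 \<and> w \<le> u + 1"
  shows "(\<forall>u. u \<le> v + t \<and> v \<le> u + t \<longrightarrow> {i\<in>{1..k}. u \<in> P i} = {i\<in>{1..k}. u \<in> P' i})
     \<Longrightarrow> run A E P k t v = run A E P' k t v"
proof (induction t arbitrary: v)
  case 0
  then have "{i\<in>{1..k}. v \<in> P i} = {i\<in>{1..k}. v \<in> P' i}" by auto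
  then show ?case by simp
next
  case (Suc t)
  have h1: "run A E P k t v = run A E P' k t v"
    using Suc.prems by (intro Suc.IH) auto
  have h2: "run A E P k t u = run A E P' k t u" if "u \<in> nbrs E v" for u
  proof (rule Suc.IH, intro allI impI)
    fix w assume "w \<le> u + t \<and> u \<le> w + t"
    moreover have "v \<le> u + 1 \<and> u \<le> v + 1" using E that unfolding nbrs_def by blast
    ultimately show "{i\<in>{1..k}. w \<in> P i} = {i\<in>{1..k}. w \<in> P' i}"
      using Suc.prems by auto
  qed
  have h3: "(\<lambda>u. if u \<in> nbrs E v \<and> out A (run A E P k t u) = None
             then Some (msg A (run A E P k t u) v) else None)
          = (\<lambda>u. if u \<in> nbrs E v \<and> out A (run A E P' k t u) = None
             then Some (msg A (run A E P' k t u) v) else None)"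
    by (rule ext) (auto simp: h2)
  show ?case by (simp only: run.simps h1 h3)
qed

definition pE :: "nat \<Rightarrow> (nat \<times> nat) set" where
  "pE n = {(i,j). i < n \<and> j < n \<and> (j = i + 1 \<or> i = j + 1)}"

lemma pE_conn: "v < n \<Longrightarrow> u \<le> v \<Longrightarrow> (u, v) \<in> (pE n)\<^sup>* \<and> (v, u) \<in> (pE n)\<^sup>*"
proof (induction v)
  case 0 then show ?case by auto
next
  case (Suc v)
  show ?case
  proof (cases "u = Suc v")
    case True then show ?thesis by auto
  next
    case False
    then have "(u, v) \<in> (pE n)\<^sup>* \<and> (v, u) \<in> (pE n)\<^sup>*" using Suc by auto
    moreover have "(v, Suc v) \<in> pE n" "(Suc v, v) \<in> pE n" using Suc.prems by (auto simp: pE_def)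
    ultimately show ?thesis by (meson rtrancl.rtrancl_into_rtrancl converse_rtrancl_into_rtrancl)
  qed
qed

lemma pE_network: "n \<ge> 1 \<Longrightarrow> network {0..<n} (pE n)"
  unfolding network_def
proof (intro conjI ballI)
  fix u v assume "n \<ge> 1" "u \<in> {0..<n}" "v \<in> {0..<n}"
  then show "(u, v) \<in> (pE n)\<^sup>*"
    using pE_conn[of u n v] pE_conn[of v n u] by (cases "u \<le> v") auto
qed (auto simp: pE_def sym_def irrefl_def)

lemma ids_ok: "c \<ge> 1 \<Longrightarrow> n \<ge> 1 \<Longrightarrow> ids_bounded c {0..<n}"
  unfolding ids_bounded_def
proof -
  assume "c \<ge> 1" "n \<ge> 1"
  then have "n \<le> n ^ c"
    by (metis le_refl one_le_numeral power_increasing power_one_right not_one_le_zero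
        bot_nat_0.not_eq_extremum le_trans self_le_power)
  then show "{0..<n} \<subseteq> {..<card {0..<n} ^ c}" by auto
qed

theorem mainTheorem1:
  fixes c :: nat
  assumes "c \<ge> 1"
  shows "\<not> (\<exists>(A :: ('s, 'm) local_alg) (f :: nat \<Rightarrow> nat). mcis_local_fpt_alg c A f)"
proof
  assume "\<exists>(A :: ('s, 'm) local_alg) (f :: nat \<Rightarrow> nat). mcis_local_fpt_alg c A f"
  then obtain A :: "('s, 'm) local_alg" and f where alg: "mcis_local_fpt_alg c A f" by blast
  define r where "r = f 2"
  define b where "b = 2 * r + 2"
  define n where "n = b + 2"
  define V where "V = {0..<n}"
  define E where "E = pE n"
  define P1 where "P1 = (\<lambda>i::nat. if i = 1 then {0::nat} else if i = 2 then {1} else {})"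
  define P2 where "P2 = (\<lambda>i::nat. if i = 1 then {b} else if i = 2 then {b+1} else {})"
  define PY where "PY = (\<lambda>i::nat. if i = 1 then {0, b} else if i = 2 then {1, b+1} else {})"
  have n1: "n \<ge> 1" by (simp add: n_def)
  have net: "network V E" using pE_network[OF n1] by (simp add: V_def E_def)
  have ids: "ids_bounded c V" using ids_ok[OF assms n1] by (simp add: V_def)
  have inst: "mcis_instance V E P 2" if "P 1 \<subseteq> V" "P 2 \<subseteq> V" "P 1 \<inter> P 2 = {}" for P
  proof -
    have "{1..2::nat} = {1,2}" by auto
    then show ?thesis unfolding mcis_instance_def using net that by auto
  qed
  have iY: "mcis_instance V E PY 2" by (rule inst) (auto simp: PY_def V_def n_def b_def)
  have i1: "mcis_instance V E P1 2" by (rule inst) (auto simp: P1_def V_def n_def b_def)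
  have i2: "mcis_instance V E P2 2" by (rule inst) (auto simp: P2_def V_def n_def b_def)
  have yY: "mcis_yes V E PY 2"
    unfolding mcis_yes_def
    apply (rule exI[of _ "\<lambda>i. if i = 1 then 0 else b + 1"])
    by (auto simp: PY_def E_def pE_def b_def)
  have n1no: "\<not> mcis_yes V E P1 2"
  proof
    assume "mcis_yes V E P1 2"
    then obtain x where "\<forall>i\<in>{1..2}. x i \<in> P1 i" "\<forall>i\<in>{1..2}. \<forall>j\<in>{1..2}. i \<noteq> j \<longrightarrow> (x i, x j) \<notin> E"
      unfolding mcis_yes_def by blast
    then have "x 1 \<in> P1 1" "x 2 \<in> P1 2" "(x 1, x 2) \<notin> E" by auto
    then have "x 1 = 0" "x 2 = 1" "(x 1, x 2) \<notin> E" by (auto simp: P1_def)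
    then show False by (simp add: E_def pE_def n_def)
  qed
  have n2no: "\<not> mcis_yes V E P2 2"
  proof
    assume "mcis_yes V E P2 2"
    then obtain x where "\<forall>i\<in>{1..2}. x i \<in> P2 i" "\<forall>i\<in>{1..2}. \<forall>j\<in>{1..2}. i \<noteq> j \<longrightarrow> (x i, x j) \<notin> E"
      unfolding mcis_yes_def by blast
    then have "x 1 \<in> P2 1" "x 2 \<in> P2 2" "(x 1, x 2) \<notin> E" by auto
    then have "x 1 = b" "x 2 = b + 1" "(x 1, x 2) \<notin> E" by (auto simp: P2_def)
    then show False by (simp add: E_def pE_def n_def)
  qed
  have Eloc: "\<And>u w. (u,w) \<in> E \<Longrightarrow> u \<le> w + 1 \<and> w \<le> u + 1" by (auto simp: E_def pE_def)
  from alg iY ids yY obtain v where v: "v \<in> V" "out A (run A E PY 2 r v) = Some True"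
    unfolding mcis_local_fpt_alg_def r_def by blast
  show False
  proof (cases "v + r < b")
    case True
    have "run A E PY 2 r v = run A E P1 2 r v"
      by (rule run_local[OF Eloc]) (use True in \<open>auto simp: PY_def P1_def\<close>)
    then have "out A (run A E P1 2 (f 2) v) = Some True" using v by (simp add: r_def)
    then show False using alg i1 ids n1no v(1) unfolding mcis_local_fpt_alg_def by blast
  next
    case False
    have "run A E PY 2 r v = run A E P2 2 r v"
      by (rule run_local[OF Eloc]) (use False in \<open>auto simp: PY_def P2_def b_def\<close>)
    then have "out A (run A E P2 2 (f 2) v) = Some True" using v by (simp add: r_def)
    then show False using alg i2 ids n2no v(1) unfolding mcis_local_fpt_alg_def by blast
  qed
qed

end
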